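(* Let $G$ be a finite simple graph and let $\mathcal{V}$ be a maximum-cardinality collection of pairwise edge-disjoint triangles of $G$. Then for every $\psi\in\mathcal{V}$: (1) $|base(\psi)| \neq 2$; (2) if $|base(\psi)|=3$, then exactly three triangles are singly-attached to $\psi$, and all of them share a common anchoring vertex $a$; in this case $V(\psi)\cup\{a\}$ induces a $K_4$.
   Context: Triangles are sets of three pairwise adjacent vertices, identified with their edge sets. Triangles in $\mathcal{V}$ are solution triangles. A triangle $t\notin\mathcal{V}$ shares at most one edge with each $\psi\in\mathcal{V}$. If $t\notin\mathcal{V}$ shares an edge with exactly one triangle $\psi\in\mathcal{V}$, $t$ is singly-attached to $\psi$; the edge in $E(t)\cap E(\psi)$ is called a base-edge, and the vertex of $V(t)\setminus V(\psi)$ is the anchoring vertex of $t$. For $\psi\in\mathcal{V}$, $base(\psi)$ denotes the set of edges of $\psi$ that are base-edges (i.e., that lie in some triangle singly-attached to $\psi$). *)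

theory Defs
  imports Main
begin

definition simple_graph :: "'a set \<Rightarrow> 'a set set \<Rightarrow> bool" where
  "simple_graph V E \<longleftrightarrow> finite V \<and> (\<forall>e\<in>E. e \<subseteq> V \<and> card e = 2)"

definition triangle :: "'a set \<Rightarrow> 'a set set \<Rightarrow> 'a set \<Rightarrow> bool" where
  "triangle V E t \<longleftrightarrow> t \<subseteq> V \<and> card t = 3 \<and>
     (\<forall>x\<in>t. \<forall>y\<in>t. x \<noteq> y \<longrightarrow> {x, y} \<in> E)"

definition tedges :: "'a set \<Rightarrow> 'a set set" where
  "tedges t = {e. e \<subseteq> t \<and> card e = 2}"

definition triangle_packing :: "'a set \<Rightarrow> 'a set set \<Rightarrow> 'a set set \<Rightarrow> bool" where
  "triangle_packing V E P \<longleftrightarrow> (\<forall>t\<in>P. triangle V E t) \<and>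
     (\<forall>t\<in>P. \<forall>s\<in>P. t \<noteq> s \<longrightarrow> tedges t \<inter> tedges s = {})"

definition max_triangle_packing :: "'a set \<Rightarrow> 'a set set \<Rightarrow> 'a set set \<Rightarrow> bool" where
  "max_triangle_packing V E P \<longleftrightarrow> triangle_packing V E P \<and>
     (\<forall>Q. triangle_packing V E Q \<longrightarrow> card Q \<le> card P)"

definition singly_attached ::
  "'a set \<Rightarrow> 'a set set \<Rightarrow> 'a set set \<Rightarrow> 'a set \<Rightarrow> 'a set \<Rightarrow> bool" where
  "singly_attached V E P t psi \<longleftrightarrow> triangle V E t \<and> t \<notin> P \<and> psi \<in> P \<and>
     tedges t \<inter> tedges psi \<noteq> {} \<and>
     (\<forall>phi\<in>P. phi \<noteq> psi \<longrightarrow> tedges t \<inter> tedges phi = {})"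

definition base :: "'a set \<Rightarrow> 'a set set \<Rightarrow> 'a set set \<Rightarrow> 'a set \<Rightarrow> 'a set set" where
  "base V E P psi = {e \<in> tedges psi. \<exists>t. singly_attached V E P t psi \<and> e \<in> tedges t}"

definition anchoring_vertex :: "'a set \<Rightarrow> 'a set \<Rightarrow> 'a" where
  "anchoring_vertex t psi = (THE a. a \<in> t - psi)"

end

theory Submission
  imports Defs
begin

lemma tedges_pair: "{p,q} \<in> tedges t \<longleftrightarrow> p \<in> t \<and> q \<in> t \<and> p \<noteq> q"
  by (auto simp: tedges_def card_2_iff)

lemma tedgesD: "e \<in> tedges t \<Longrightarrow> \<exists>p q. e = {p,q} \<and> p \<noteq> q \<and> p \<in> t \<and> q \<in> t"
  unfolding tedges_def by (auto simp: card_2_iff)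

lemma tri_edge_E: "triangle V E t \<Longrightarrow> e \<in> tedges t \<Longrightarrow> e \<in> E"
  unfolding triangle_def using tedgesD by metis

lemma tri_fin: "triangle V E t \<Longrightarrow> finite t"
  unfolding triangle_def by (auto intro: card_ge_0_finite)

lemma sa_form:
  assumes "triangle_packing V E P" "singly_attached V E P t psi"
    "e \<in> tedges t" "e \<in> tedges psi"
  shows "\<exists>c. c \<notin> psi \<and> c \<in> V \<and> t = insert c e \<and> c \<notin> e"
proof -
  have tt: "triangle V E t" "t \<notin> P" "psi \<in> P" using assms(2) unfolding singly_attached_def by auto
  have tp: "triangle V E psi" using assms(1) tt(3) unfolding triangle_packing_def by auto
  have ft: "finite t" using tri_fin tt(1) .
  have et: "e \<subseteq> t" "card e = 2" using assms(3) unfolding tedges_def by auto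
  have ep: "e \<subseteq> psi" using assms(4) unfolding tedges_def by auto
  have "card (t - e) = 1" using card_Diff_subset[OF finite_subset[OF et(1) ft] et(1)] et tt(1)
    unfolding triangle_def by auto
  then obtain c where c: "t - e = {c}" by (auto simp: card_Suc_eq)
  hence teq: "t = insert c e" using et by auto
  have "c \<notin> psi"
  proof
    assume "c \<in> psi"
    hence "t \<subseteq> psi" using teq ep by auto
    moreover have "card t = card psi" using tt(1) tp unfolding triangle_def by auto
    moreover have "finite psi" using tri_fin tp .
    ultimately have "t = psi" using card_subset_eq by metis
    thus False using tt by auto
  qed
  moreover have "c \<in> V" using tt(1) c unfolding triangle_def by auto
  ultimately show ?thesis using teq c by auto
qed

lemma anchor_eq: "e \<subseteq> psi \<Longrightarrow> a \<notin> psi \<Longrightarrow> anchoring_vertex (insert a e) psi = a"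
proof -
  assume "e \<subseteq> psi" "a \<notin> psi"
  hence "insert a e - psi = {a}" by auto
  thus ?thesis unfolding anchoring_vertex_def by auto
qed

lemma edges_inter:
  assumes "e1 \<in> tedges psi" "e2 \<in> tedges psi" "e1 \<noteq> e2"
  shows "card (e1 \<inter> e2) \<le> 1"
proof (rule ccontr)
  assume nt: "\<not> card (e1 \<inter> e2) \<le> 1"
  have c: "card e1 = 2" "card e2 = 2" using assms unfolding tedges_def by auto
  hence f: "finite e1" "finite e2" by (auto intro: card_ge_0_finite)
  have "card (e1 \<inter> e2) \<le> 2" using card_mono[OF f(1), of "e1 \<inter> e2"] c by auto
  hence "card (e1 \<inter> e2) = 2" using nt by auto
  hence "e1 \<inter> e2 = e1" "e1 \<inter> e2 = e2"
    using card_subset_eq[OF f(1), of "e1 \<inter> e2"] card_subset_eq[OF f(2), of "e1 \<inter> e2"] c by auto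
  thus False using assms by auto
qed

lemma edges_union:
  assumes "card psi = 3" "e1 \<in> tedges psi" "e2 \<in> tedges psi" "e1 \<noteq> e2"
  shows "e1 \<union> e2 = psi"
proof -
  have c: "card e1 = 2" "card e2 = 2" "e1 \<subseteq> psi" "e2 \<subseteq> psi" using assms unfolding tedges_def by auto
  hence f: "finite e1" "finite e2" by (auto intro: card_ge_0_finite)
  have fp: "finite psi" using assms(1) by (auto intro: card_ge_0_finite)
  have "card (e1 \<union> e2) + card (e1 \<inter> e2) = 4" using card_Un_Int[OF f] c by auto
  hence "card (e1 \<union> e2) \<ge> 3" using edges_inter[OF assms(2-4)] by auto
  moreover have "card (e1 \<union> e2) \<le> 3" using card_mono[OF fp, of "e1 \<union> e2"] c assms(1) by auto
  ultimately show ?thesis using card_subset_eq[OF fp, of "e1 \<union> e2"] c assms(1) by auto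
qed

lemma finite_packing:
  assumes "simple_graph V E" "triangle_packing V E P"
  shows "finite P"
proof -
  have "P \<subseteq> Pow V" using assms(2) unfolding triangle_packing_def triangle_def by auto
  moreover have "finite V" using assms(1) unfolding simple_graph_def by auto
  ultimately show ?thesis using finite_subset by blast
qed

lemma swap:
  assumes sg: "simple_graph V E" and mx: "max_triangle_packing V E P" and pP: "psi \<in> P"
    and s1: "singly_attached V E P (insert a e1) psi"
    and s2: "singly_attached V E P (insert b e2) psi"
    and e: "e1 \<in> tedges psi" "e2 \<in> tedges psi" "e1 \<noteq> e2"
    and ab: "a \<notin> psi" "b \<notin> psi"
  shows "a = b"
proof (rule ccontr)
  assume nab: "a \<noteq> b"
  define t1 where "t1 = insert a e1"
  define t2 where "t2 = insert b e2"
  have pk: "triangle_packing V E P" using mx unfolding max_triangle_packing_def by auto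
  have fP: "finite P" using finite_packing[OF sg pk] .
  have ep: "e1 \<subseteq> psi" "e2 \<subseteq> psi" using e unfolding tedges_def by auto
  have T: "triangle V E t1" "t1 \<notin> P" "\<forall>phi\<in>P. phi \<noteq> psi \<longrightarrow> tedges t1 \<inter> tedges phi = {}"
    using s1 unfolding singly_attached_def t1_def by auto
  have T2: "triangle V E t2" "t2 \<notin> P" "\<forall>phi\<in>P. phi \<noteq> psi \<longrightarrow> tedges t2 \<inter> tedges phi = {}"
    using s2 unfolding singly_attached_def t2_def by auto
  have n12: "t1 \<noteq> t2" using nab ab ep unfolding t1_def t2_def by auto
  have i12: "t1 \<inter> t2 \<subseteq> e1 \<inter> e2" using nab ab ep unfolding t1_def t2_def by auto
  have d12: "tedges t1 \<inter> tedges t2 = {}"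
  proof (rule ccontr)
    assume "tedges t1 \<inter> tedges t2 \<noteq> {}"
    then obtain f where f: "f \<subseteq> t1" "f \<subseteq> t2" "card f = 2" unfolding tedges_def by auto
    have "finite e1" using e(1) unfolding tedges_def by (auto intro: card_ge_0_finite)
    hence "finite (e1 \<inter> e2)" by simp
    hence "card f \<le> card (e1 \<inter> e2)" using f i12 card_mono by (metis Int_greatest subset_trans)
    thus False using edges_inter[OF e] f by auto
  qed
  define Q where "Q = insert t1 (insert t2 (P - {psi}))"
  have "card Q = card (P - {psi}) + 2" unfolding Q_def using n12 T(2) T2(2) fP by auto
  moreover have "card (P - {psi}) + 1 = card P" 
  proof -
    have "card P > 0" using fP pP card_gt_0_iff by blast
    thus ?thesis using card_Diff_singleton[OF pP] by simp
  qed
  ultimately have cQ: "card Q > card P" by auto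
  have pkP: "\<forall>t\<in>P. \<forall>s\<in>P. t \<noteq> s \<longrightarrow> tedges t \<inter> tedges s = {}" "\<forall>t\<in>P. triangle V E t"
    using pk unfolding triangle_packing_def by auto
  have D1: "\<forall>phi\<in>P. phi \<noteq> psi \<longrightarrow> tedges phi \<inter> tedges t1 = {}"
    using T(3) by (simp add: Int_commute)
  have D2: "\<forall>phi\<in>P. phi \<noteq> psi \<longrightarrow> tedges phi \<inter> tedges t2 = {}"
    using T2(3) by (simp add: Int_commute)
  have d21: "tedges t2 \<inter> tedges t1 = {}" using d12 by (simp add: Int_commute)
  have "triangle_packing V E Q"
    unfolding triangle_packing_def
  proof (intro conjI ballI impI)
    fix t assume "t \<in> Q" thus "triangle V E t" using T(1) T2(1) pkP(2) unfolding Q_def by auto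
  next
    fix t s assume ts: "t \<in> Q" "s \<in> Q" "t \<noteq> s"
    from ts(1) have "t = t1 \<or> t = t2 \<or> (t \<in> P \<and> t \<noteq> psi)" unfolding Q_def by auto
    moreover from ts(2) have "s = t1 \<or> s = t2 \<or> (s \<in> P \<and> s \<noteq> psi)" unfolding Q_def by auto
    ultimately show "tedges t \<inter> tedges s = {}"
    proof (elim disjE conjE)
    qed (use ts(3) T(3) T2(3) D1 D2 d12 d21 pkP(1) in simp_all)
  qed
  hence "card Q \<le> card P" using mx unfolding max_triangle_packing_def by auto
  thus False using cQ by auto
qed

lemma third:
  assumes pk: "triangle_packing V E P" and pP: "psi \<in> P"
    and s1: "singly_attached V E P (insert a e1) psi"
    and s2: "singly_attached V E P (insert a e2) psi"
    and e: "e1 \<in> tedges psi" "e2 \<in> tedges psi" "e1 \<noteq> e2" "e3 \<in> tedges psi"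
    and a: "a \<notin> psi" "a \<in> V"
  shows "singly_attached V E P (insert a e3) psi"
proof -
  have tp: "triangle V E psi" using pk pP unfolding triangle_packing_def by auto
  have U: "e1 \<union> e2 = psi" using edges_union[OF _ e(1-3)] tp unfolding triangle_def by auto
  have e3: "e3 \<subseteq> psi" "card e3 = 2" using e(4) unfolding tedges_def by auto
  have T1: "triangle V E (insert a e1)" "\<forall>phi\<in>P. phi \<noteq> psi \<longrightarrow> tedges (insert a e1) \<inter> tedges phi = {}"
    using s1 unfolding singly_attached_def by auto
  have T2: "triangle V E (insert a e2)" "\<forall>phi\<in>P. phi \<noteq> psi \<longrightarrow> tedges (insert a e2) \<inter> tedges phi = {}"
    using s2 unfolding singly_attached_def by auto
  have adj: "{a, y} \<in> E" if "y \<in> psi" for y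
  proof -
    have "y \<in> e1 \<or> y \<in> e2" using U that by auto
    moreover have "y \<noteq> a" using a that by auto
    ultimately show ?thesis using T1(1) T2(1) unfolding triangle_def by auto
  qed
  have fe3: "finite e3" using e3 by (auto intro: card_ge_0_finite)
  have tri: "triangle V E (insert a e3)"
    unfolding triangle_def
  proof (intro conjI ballI impI)
    show "insert a e3 \<subseteq> V" using e3 tp a unfolding triangle_def by auto
    have "a \<notin> e3" using e3 a by auto
    thus "card (insert a e3) = 3" using e3 fe3 by simp
  next
    fix x y assume xy: "x \<in> insert a e3" "y \<in> insert a e3" "x \<noteq> y"
    show "{x, y} \<in> E"
    proof (cases "x = a")
      case True thus ?thesis using xy adj e3 by auto
    next
      case False
      show ?thesis
      proof (cases "y = a")
        case True
        hence "{x, y} = {a, x}" by (simp add: insert_commute)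
        thus ?thesis using xy adj e3 False True by auto
      next
        case F2: False
        thus ?thesis using xy False e3 tp unfolding triangle_def by auto
      qed
    qed
  qed
  have e3in: "e3 \<in> tedges (insert a e3)" using e3 unfolding tedges_def by auto
  have pkP: "\<forall>t\<in>P. \<forall>s\<in>P. t \<noteq> s \<longrightarrow> tedges t \<inter> tedges s = {}"
    using pk unfolding triangle_packing_def by auto
  have nP: "insert a e3 \<notin> P"
  proof
    assume "insert a e3 \<in> P"
    moreover have "insert a e3 \<noteq> psi" using a by auto
    ultimately have "tedges (insert a e3) \<inter> tedges psi = {}" using pkP pP by simp
    thus False using e3in e(4) by auto
  qed
  have disj: "tedges (insert a e3) \<inter> tedges phi = {}" if phi: "phi \<in> P" "phi \<noteq> psi" for phi
  proof (rule ccontr)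
    assume "tedges (insert a e3) \<inter> tedges phi \<noteq> {}"
    then obtain f where f1: "f \<in> tedges (insert a e3)" and f2: "f \<in> tedges phi" by auto
    obtain p q where pq: "f = {p,q}" "p \<noteq> q" "p \<in> insert a e3" "q \<in> insert a e3"
      using tedgesD[OF f1] by auto
    show False
    proof (cases "p = a \<or> q = a")
      case True
      obtain r where r: "f = {a, r}" "r \<in> psi" "r \<noteq> a"
      proof (cases "p = a")
        case True
        thus ?thesis using that[of q] pq e3 by auto
      next
        case False
        hence "q = a" using \<open>p = a \<or> q = a\<close> by simp
        moreover have "f = {q, p}" using pq(1) by (simp add: insert_commute)
        ultimately show ?thesis using that[of p] pq e3 False by auto
      qed
      have "r \<in> e1 \<or> r \<in> e2" using U r by auto
      hence "f \<in> tedges (insert a e1) \<or> f \<in> tedges (insert a e2)" using r by (auto simp: tedges_pair)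
      thus False using T1(2) T2(2) phi f2 by blast
    next
      case False
      hence "f \<in> tedges psi" using pq e3 by (auto simp: tedges_pair)
      thus False using pkP phi pP f2 by blast
    qed
  qed
  show ?thesis unfolding singly_attached_def using tri nP pP e3in e(4) disj by auto
qed

lemma card_tedges:
  assumes "card psi = 3"
  shows "card (tedges psi) = 3"
proof -
  obtain u v w where uvw: "psi = {u,v,w}" "u \<noteq> v" "v \<noteq> w" "u \<noteq> w"
    using assms card_3_iff by metis
  have "tedges psi = {{u,v},{v,w},{u,w}}"
  proof
    show "tedges psi \<subseteq> {{u,v},{v,w},{u,w}}"
    proof
      fix e assume "e \<in> tedges psi"
      then obtain p q where "e = {p,q}" "p \<noteq> q" "p \<in> psi" "q \<in> psi" using tedgesD by metis
      thus "e \<in> {{u,v},{v,w},{u,w}}" using uvw by (auto simp: insert_commute)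
    qed
    show "{{u,v},{v,w},{u,w}} \<subseteq> tedges psi" using uvw by (auto simp: tedges_pair)
  qed
  thus ?thesis using uvw by (simp add: doubleton_eq_iff)
qed

theorem proposition8:
  fixes V :: "'a set" and E :: "'a set set" and P :: "'a set set" and psi :: "'a set"
  assumes "simple_graph V E"
    and "max_triangle_packing V E P"
    and "psi \<in> P"
  shows "card (base V E P psi) \<noteq> 2 \<and>
         (card (base V E P psi) = 3 \<longrightarrow>
           card {t. singly_attached V E P t psi} = 3 \<and>
           (\<exists>a. (\<forall>t. singly_attached V E P t psi \<longrightarrow> anchoring_vertex t psi = a) \<and>
                a \<in> V \<and> a \<notin> psi \<and>
                (\<forall>x\<in>psi \<union> {a}. \<forall>y\<in>psi \<union> {a}. x \<noteq> y \<longrightarrow> {x, y} \<in> E)))"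
proof -
  note sg = assms(1) and mx = assms(2) and pP = assms(3)
  have pk: "triangle_packing V E P" using mx unfolding max_triangle_packing_def by auto
  have tp: "triangle V E psi" using pk pP unfolding triangle_packing_def by auto
  have c3: "card psi = 3" using tp unfolding triangle_def by auto
  define B where "B = base V E P psi"
  have BT: "B \<subseteq> tedges psi" unfolding B_def base_def by auto
  have fT: "finite (tedges psi)" using card_tedges[OF c3] by (auto intro: card_ge_0_finite)
  have fB: "finite B" using finite_subset[OF BT fT] .
  have main: "card B = 3 \<and> card {t. singly_attached V E P t psi} = 3 \<and>
           (\<exists>a. (\<forall>t. singly_attached V E P t psi \<longrightarrow> anchoring_vertex t psi = a) \<and>
                a \<in> V \<and> a \<notin> psi \<and>
                (\<forall>x\<in>psi \<union> {a}. \<forall>y\<in>psi \<union> {a}. x \<noteq> y \<longrightarrow> {x, y} \<in> E))"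
    if ge: "card B \<ge> 2"
  proof -
    obtain e1 where e1: "e1 \<in> B" using ge by fastforce
    have "card (B - {e1}) \<ge> 1" using ge e1 fB by simp
    hence "B - {e1} \<noteq> {}" by (metis card.empty not_one_le_zero)
    then obtain e2 where e2: "e2 \<in> B" "e2 \<noteq> e1" by blast
    obtain t1 where t1: "singly_attached V E P t1 psi" "e1 \<in> tedges t1" "e1 \<in> tedges psi"
      using e1 unfolding B_def base_def by auto
    obtain t2 where t2: "singly_attached V E P t2 psi" "e2 \<in> tedges t2" "e2 \<in> tedges psi"
      using e2 unfolding B_def base_def by auto
    obtain a where a: "a \<notin> psi" "a \<in> V" "t1 = insert a e1"
      using sa_form[OF pk t1] by auto
    obtain b where b: "b \<notin> psi" "t2 = insert b e2"
      using sa_form[OF pk t2] by auto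
    have s1: "singly_attached V E P (insert a e1) psi" using t1 a by simp
    have s2': "singly_attached V E P (insert b e2) psi" using t2 b by simp
    have "a = b" using swap[OF sg mx pP s1 s2' t1(3) t2(3) e2(2)[symmetric] a(1) b(1)] .
    hence s2: "singly_attached V E P (insert a e2) psi" using s2' by simp
    have allA: "\<exists>e\<in>tedges psi. t = insert a e" if st: "singly_attached V E P t psi" for t
    proof -
      obtain e where e: "e \<in> tedges t" "e \<in> tedges psi" using st unfolding singly_attached_def by auto
      obtain c where c: "c \<notin> psi" "t = insert c e" using sa_form[OF pk st e] by auto
      have sc: "singly_attached V E P (insert c e) psi" using st c by simp
      have "c = a"
      proof (cases "e = e1")
        case True
        hence "e \<noteq> e2" using e2 by simp
        thus ?thesis using swap[OF sg mx pP sc s2 e(2) t2(3) _ c(1) a(1)] by simp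
      next
        case False
        thus ?thesis using swap[OF sg mx pP sc s1 e(2) t1(3) _ c(1) a(1)] by simp
      qed
      thus ?thesis using c e by auto
    qed
    have allS: "singly_attached V E P (insert a e) psi" if "e \<in> tedges psi" for e
      using third[OF pk pP s1 s2 t1(3) t2(3) e2(2)[symmetric] that a(1) a(2)] .
    have "tedges psi \<subseteq> B"
    proof
      fix e assume e: "e \<in> tedges psi"
      have "e \<in> tedges (insert a e)" using e unfolding tedges_def by auto
      thus "e \<in> B" unfolding B_def base_def using e allS[OF e] by auto
    qed
    hence cB: "card B = 3" using BT card_tedges[OF c3] by auto
    have SA: "{t. singly_attached V E P t psi} = insert a ` tedges psi"
      using allA allS by auto
    have inj: "inj_on (insert a) (tedges psi)"
    proof (rule inj_onI)
      fix x y assume xy: "x \<in> tedges psi" "y \<in> tedges psi" "insert a x = insert a y"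
      have "a \<notin> x" "a \<notin> y" using xy a(1) unfolding tedges_def by auto
      thus "x = y" using xy(3) by (metis Diff_insert_absorb)
    qed
    have cS: "card {t. singly_attached V E P t psi} = 3"
      unfolding SA using card_image[OF inj] card_tedges[OF c3] by simp
    have anc: "anchoring_vertex t psi = a" if st: "singly_attached V E P t psi" for t
    proof -
      obtain e where "e \<in> tedges psi" "t = insert a e" using allA[OF st] by auto
      thus ?thesis using anchor_eq[of e psi a] a(1) unfolding tedges_def by auto
    qed
    have U: "e1 \<union> e2 = psi" using edges_union[OF c3 t1(3) t2(3)] e2 by auto
    have T1: "triangle V E (insert a e1)" "triangle V E (insert a e2)"
      using s1 s2 unfolding singly_attached_def by auto
    have adj: "{a, y} \<in> E" if "y \<in> psi" for y
    proof -
      have "y \<in> e1 \<or> y \<in> e2" using U that by auto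
      moreover have "y \<noteq> a" using a that by auto
      ultimately show ?thesis using T1 unfolding triangle_def by auto
    qed
    have K4: "\<forall>x\<in>psi \<union> {a}. \<forall>y\<in>psi \<union> {a}. x \<noteq> y \<longrightarrow> {x, y} \<in> E"
    proof (intro ballI impI)
      fix x y assume xy: "x \<in> psi \<union> {a}" "y \<in> psi \<union> {a}" "x \<noteq> y"
      show "{x, y} \<in> E"
      proof (cases "x = a")
        case True thus ?thesis using xy adj by auto
      next
        case False
        show ?thesis
        proof (cases "y = a")
          case True
          hence "{x, y} = {a, x}" by (simp add: insert_commute)
          thus ?thesis using xy adj False by auto
        next
          case F2: False
          thus ?thesis using xy False tp unfolding triangle_def by auto
        qed
      qed
    qed
    show ?thesis using cB cS anc a K4 by blast
  qed
  show ?thesis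
  proof (intro conjI impI)
    show "card (base V E P psi) \<noteq> 2" using main unfolding B_def by fastforce
  next
    assume "card (base V E P psi) = 3"
    thus "card {t. singly_attached V E P t psi} = 3" using main unfolding B_def by auto
  next
    assume "card (base V E P psi) = 3"
    hence "card B \<ge> 2" unfolding B_def by simp
    thus "\<exists>a. (\<forall>t. singly_attached V E P t psi \<longrightarrow> anchoring_vertex t psi = a) \<and>
                a \<in> V \<and> a \<notin> psi \<and>
                (\<forall>x\<in>psi \<union> {a}. \<forall>y\<in>psi \<union> {a}. x \<noteq> y \<longrightarrow> {x, y} \<in> E)"
      using main by blast
  qed
qed

end
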